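(* Let $\mathfrak{g}$ be a filiform Lie algebra of odd dimension $n\ge3$ over a field $K$ of characteristic zero, and fix an adapted basis $\{e_1,\dots,e_n\}$, with $\mathfrak{g}_i=\langle e_i,\dots,e_n\rangle$. Then $\chi(\mathfrak{g})=1$ if and only if $[\mathfrak{g}_i,\mathfrak{g}_{n-i}]\neq0$ for all $i=1,\dots,n-1$.
   Context: A filiform Lie algebra of dimension $n$ is a nilpotent Lie algebra with $\dim\mathfrak{g}^k=n-k$ for $2\le k\le n$ (lower central series $\mathfrak{g}^1=\mathfrak{g}$, $\mathfrak{g}^{k+1}=[\mathfrak{g},\mathfrak{g}^k]$). An adapted basis is a basis $\{e_1,\dots,e_n\}$ with $[e_1,e_i]=e_{i+1}$ ($2\le i\le n-1$), $[e_1,e_n]=0$, $[e_2,e_3]\in\langle e_5,\dots,e_n\rangle$; such a basis exists, and (Vergne) it then satisfies $[e_i,e_j]\in\langle e_{i+j},\dots,e_n\rangle$ if $i+j\le n$, $[e_i,e_j]=0$ if $i+j>n+1$, and $[e_i,e_{n+1-i}]=(-1)^i\alpha e_n$ for some $\alpha\in K$ with $\alpha=0$ when $n$ is odd. For $\ell\in\mathfrak{g}^*$, $\mathfrak{g}(\ell)=\{y\in\mathfrak{g}\mid\ell([x,y])=0\ \forall x\in\mathfrak{g}\}$ and $\chi(\mathfrak{g})=\min_{\ell\in\mathfrak{g}^*}\dim\mathfrak{g}(\ell)$. *)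

theory Defs
  imports Complex_Main
begin

definition lie_algebra :: "('k::field \<Rightarrow> 'g::ab_group_add \<Rightarrow> 'g) \<Rightarrow> ('g \<Rightarrow> 'g \<Rightarrow> 'g) \<Rightarrow> bool" where
  "lie_algebra s br \<longleftrightarrow> vector_space s \<and>
     (\<forall>x y z. br (x + y) z = br x z + br y z) \<and>
     (\<forall>x y z. br x (y + z) = br x y + br x z) \<and>
     (\<forall>c x y. br (s c x) y = s c (br x y)) \<and>
     (\<forall>c x y. br x (s c y) = s c (br x y)) \<and>
     (\<forall>x. br x x = 0) \<and>
     (\<forall>x y z. br x (br y z) + br y (br z x) + br z (br x y) = 0)"

definition bracket_space :: "('k::field \<Rightarrow> 'g::ab_group_add \<Rightarrow> 'g) \<Rightarrow> ('g \<Rightarrow> 'g \<Rightarrow> 'g) \<Rightarrow> 'g set \<Rightarrow> 'g set \<Rightarrow> 'g set" where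
  "bracket_space s br A B = module.span s {br a b | a b. a \<in> A \<and> b \<in> B}"

text \<open>Lower central series: g^1 = g, g^(k+1) = [g, g^k] (g^0 is also set to g).\<close>
fun lcs :: "('k::field \<Rightarrow> 'g::ab_group_add \<Rightarrow> 'g) \<Rightarrow> ('g \<Rightarrow> 'g \<Rightarrow> 'g) \<Rightarrow> nat \<Rightarrow> 'g set" where
  "lcs s br 0 = UNIV"
| "lcs s br (Suc 0) = UNIV"
| "lcs s br (Suc (Suc k)) = bracket_space s br UNIV (lcs s br (Suc k))"

definition finite_dim :: "('k::field \<Rightarrow> 'g::ab_group_add \<Rightarrow> 'g) \<Rightarrow> bool" where
  "finite_dim s \<longleftrightarrow> (\<exists>B. finite B \<and> module.span s B = UNIV)"

definition nilpotent_lie :: "('k::field \<Rightarrow> 'g::ab_group_add \<Rightarrow> 'g) \<Rightarrow> ('g \<Rightarrow> 'g \<Rightarrow> 'g) \<Rightarrow> bool" where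
  "nilpotent_lie s br \<longleftrightarrow> (\<exists>k\<ge>1. lcs s br k = {0})"

definition filiform :: "('k::field \<Rightarrow> 'g::ab_group_add \<Rightarrow> 'g) \<Rightarrow> ('g \<Rightarrow> 'g \<Rightarrow> 'g) \<Rightarrow> nat \<Rightarrow> bool" where
  "filiform s br n \<longleftrightarrow> lie_algebra s br \<and> finite_dim s \<and> vector_space.dim s (UNIV :: 'g set) = n \<and>
     nilpotent_lie s br \<and>
     (\<forall>k. 2 \<le> k \<and> k \<le> n \<longrightarrow> vector_space.dim s (lcs s br k) = n - k)"

definition adapted_basis :: "('k::field \<Rightarrow> 'g::ab_group_add \<Rightarrow> 'g) \<Rightarrow> ('g \<Rightarrow> 'g \<Rightarrow> 'g) \<Rightarrow> nat \<Rightarrow> (nat \<Rightarrow> 'g) \<Rightarrow> bool" where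
  "adapted_basis s br n e \<longleftrightarrow>
     inj_on e {1..n} \<and> \<not> module.dependent s (e ` {1..n}) \<and> module.span s (e ` {1..n}) = UNIV \<and>
     (\<forall>i. 2 \<le> i \<and> i \<le> n - 1 \<longrightarrow> br (e 1) (e i) = e (i + 1)) \<and>
     br (e 1) (e n) = 0 \<and>
     br (e 2) (e 3) \<in> module.span s (e ` {5..n})"

definition basis_tail :: "('k::field \<Rightarrow> 'g::ab_group_add \<Rightarrow> 'g) \<Rightarrow> nat \<Rightarrow> (nat \<Rightarrow> 'g) \<Rightarrow> nat \<Rightarrow> 'g set" where
  "basis_tail s n e i = module.span s (e ` {i..n})"

definition stabilizer :: "('g \<Rightarrow> 'g \<Rightarrow> 'g) \<Rightarrow> ('g \<Rightarrow> 'k::zero) \<Rightarrow> 'g set" where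
  "stabilizer br l = {y. \<forall>x. l (br x y) = 0}"

definition chi :: "('k::field \<Rightarrow> 'g::ab_group_add \<Rightarrow> 'g) \<Rightarrow> ('g \<Rightarrow> 'g \<Rightarrow> 'g) \<Rightarrow> nat" where
  "chi s br = (LEAST d. \<exists>l. Vector_Spaces.linear s ((*) :: 'k \<Rightarrow> 'k \<Rightarrow> 'k) l \<and>
                              vector_space.dim s (stabilizer br l) = d)"

end

theory Submission
  imports Defs
begin


locale fil =
  fixes s :: "'k::field_char_0 \<Rightarrow> 'g::ab_group_add \<Rightarrow> 'g" and br :: "'g \<Rightarrow> 'g \<Rightarrow> 'g"
    and n :: nat and e :: "nat \<Rightarrow> 'g"
  assumes fil: "filiform s br n" and oddn: "odd n" and n3: "n \<ge> 3" and ab: "adapted_basis s br n e"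
begin

lemma lie: "lie_algebra s br" using fil unfolding filiform_def by (elim conjE)
lemma vs: "vector_space s" using lie unfolding lie_algebra_def by (elim conjE)

lemmas AB = ab[unfolded adapted_basis_def]
lemma e_inj: "inj_on e {1..n}" by (rule AB[THEN conjunct1])
lemma e_indep: "\<not> module.dependent s (e ` {1..n})" by (rule AB[THEN conjunct2, THEN conjunct1])
lemma e_span: "module.span s (e ` {1..n}) = UNIV" by (rule AB[THEN conjunct2, THEN conjunct2, THEN conjunct1])

lemma fdvs: "finite_dimensional_vector_space s (e ` {1..n})"
  apply (rule finite_dimensional_vector_space.intro[OF vs])
  apply (rule finite_dimensional_vector_space_axioms.intro)
  apply simp
  apply (rule e_indep)
  apply (rule e_span)
  done

sublocale V: finite_dimensional_vector_space s "e ` {1..n}" by (rule fdvs)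

lemmas LA = lie[unfolded lie_algebra_def]
lemma br_addL: "br (x+y) z = br x z + br y z" by (rule LA[THEN conjunct2, THEN conjunct1, rule_format])
lemma br_addR: "br x (y+z) = br x y + br x z" by (rule LA[THEN conjunct2, THEN conjunct2, THEN conjunct1, rule_format])
lemma br_scaleL: "br (s c x) y = s c (br x y)" by (rule LA[THEN conjunct2, THEN conjunct2, THEN conjunct2, THEN conjunct1, rule_format])
lemma br_scaleR: "br x (s c y) = s c (br x y)" by (rule LA[THEN conjunct2, THEN conjunct2, THEN conjunct2, THEN conjunct2, THEN conjunct1, rule_format])
lemma br_self[simp]: "br x x = 0" by (rule LA[THEN conjunct2, THEN conjunct2, THEN conjunct2, THEN conjunct2, THEN conjunct2, THEN conjunct1, rule_format])
lemma jacobi: "br x (br y z) + br y (br z x) + br z (br x y) = 0" by (rule LA[THEN conjunct2, THEN conjunct2, THEN conjunct2, THEN conjunct2, THEN conjunct2, THEN conjunct2, rule_format])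

lemma br_0L[simp]: "br 0 y = 0"
  using br_addL[of 0 0 y] by simp
lemma br_0R[simp]: "br x 0 = 0"
  using br_addR[of x 0 0] by simp
lemma br_negL: "br (-x) y = - br x y"
proof -
  have "br x y + br (-x) y = 0" using br_addL[of x "-x" y] by simp
  from minus_unique[OF this] show ?thesis by simp
qed
lemma br_negR: "br x (-y) = - br x y"
proof -
  have "br x y + br x (-y) = 0" using br_addR[of x y "-y"] by simp
  from minus_unique[OF this] show ?thesis by simp
qed
lemma br_diffL: "br (x - y) z = br x z - br y z"
  using br_addL[of x "-y" z] br_negL by simp
lemma br_diffR: "br x (y - z) = br x y - br x z"
  using br_addR[of x y "-z"] br_negR by simp
lemma br_anti: "br x y = - br y x"
proof -
  have "br (x+y) (x+y) = br x x + br y x + (br x y + br y y)" by (simp only: br_addL br_addR)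
  then have "br x y + br y x = 0" by (simp add: add.commute)
  then show ?thesis by (subst eq_neg_iff_add_eq_0)
qed

lemma br_span_R:
  assumes "y \<in> V.span A" "V.subspace T" "\<And>a. a \<in> A \<Longrightarrow> br x a \<in> T"
  shows "br x y \<in> T"
  using assms(1)
proof (induction rule: V.span_induct)
  case base
  show ?case using assms(2) unfolding V.subspace_def by (simp add: br_addR br_scaleR)
next
  case (step x) then show ?case using assms(3) by auto
qed

lemma br_span_L:
  assumes "x \<in> V.span A" "V.subspace T" "\<And>a. a \<in> A \<Longrightarrow> br a y \<in> T"
  shows "br x y \<in> T"
  using assms(1)
proof (induction rule: V.span_induct)
  case base
  show ?case using assms(2) unfolding V.subspace_def by (simp add: br_addL br_scaleL)
next
  case (step x) then show ?case using assms(3) by auto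
qed

definition F :: "nat \<Rightarrow> 'g set" where "F m = V.span (e ` {m..n})"

lemma F_sub[simp]: "V.subspace (F m)" by (simp add: F_def)
lemma F_0[simp]: "0 \<in> F m" by (simp add: F_def V.span_zero)
lemma F_add: "x \<in> F m \<Longrightarrow> y \<in> F m \<Longrightarrow> x + y \<in> F m" by (simp add: F_def V.span_add)
lemma F_diff: "x \<in> F m \<Longrightarrow> y \<in> F m \<Longrightarrow> x - y \<in> F m" by (simp add: F_def V.span_diff)
lemma F_neg: "x \<in> F m \<Longrightarrow> - x \<in> F m" by (simp add: F_def V.span_neg)
lemma F_neg_iff: "- x \<in> F m \<longleftrightarrow> x \<in> F m" using F_neg[of x m] F_neg[of "-x" m] by auto
lemma F_scale: "x \<in> F m \<Longrightarrow> s c x \<in> F m" by (simp add: F_def V.span_scale)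
lemma F_big: "n < m \<Longrightarrow> F m = {0}" by (simp add: F_def)
lemma F_1: "F 1 = UNIV" unfolding F_def by (rule e_span)
lemma e_F: "m \<le> k \<Longrightarrow> k \<le> n \<Longrightarrow> e k \<in> F m" by (simp add: F_def V.span_base)
lemma F_mono: "m \<le> m' \<Longrightarrow> F m' \<subseteq> F m"
  unfolding F_def by (rule V.span_mono) auto
lemma F_monoD: "x \<in> F m' \<Longrightarrow> m \<le> m' \<Longrightarrow> x \<in> F m" using F_mono by blast

lemma F_step: assumes "1 \<le> m" "m \<le> n" "x \<in> F m" shows "\<exists>c. x - s c (e m) \<in> F (Suc m)"
proof -
  have "{m..n} = insert m {Suc m..n}" using assms by auto
  then have "e ` {m..n} = insert (e m) (e ` {Suc m..n})" by simp
  then show ?thesis using assms(3) by (simp add: F_def V.span_breakdown_eq)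
qed

lemma e_notin: assumes "1 \<le> m" "m \<le> n" shows "e m \<notin> F (Suc m)"
proof
  assume a: "e m \<in> F (Suc m)"
  have sub: "F (Suc m) \<subseteq> V.span (e ` {1..n} - {e m})"
    unfolding F_def
  proof (rule V.span_mono, rule subsetI)
    fix x assume "x \<in> e ` {Suc m..n}"
    then obtain k where k: "k \<in> {Suc m..n}" "x = e k" by blast
    have "k \<noteq> m" "k \<in> {1..n}" "m \<in> {1..n}" using k assms by auto
    then have ne: "e k \<noteq> e m" using e_inj unfolding inj_on_def by blast
    have mem: "e k \<in> e ` {1..n}" using \<open>k \<in> {1..n}\<close> by (rule imageI)
    from mem ne have "e k \<in> e ` {1..n} - {e m}" unfolding Diff_iff singleton_iff by (rule conjI)
    then show "x \<in> e ` {1..n} - {e m}" using k(2) by simp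
  qed
  have "e m \<in> V.span (e ` {1..n} - {e m})" using a sub by (rule subsetD[rotated])
  moreover have "e m \<in> e ` {1..n}" using assms by (intro imageI) simp
  ultimately have "V.dependent (e ` {1..n})" unfolding V.dependent_def by (rule bexI)
  then show False using e_indep by contradiction
qed

lemma coef0: assumes "1 \<le> m" "m \<le> n" "s c (e m) \<in> F (Suc m)" shows "c = 0"
proof (rule ccontr)
  assume "c \<noteq> 0"
  then have "s (inverse c) (s c (e m)) = e m" by simp
  with F_scale[OF assms(3), of "inverse c"] e_notin[OF assms(1,2)] show False by simp
qed

lemma e_nz: "1 \<le> k \<Longrightarrow> k \<le> n \<Longrightarrow> e k \<noteq> 0"
  using e_notin[of k] by auto

end

context fil begin

lemma br_e1: "2 \<le> i \<Longrightarrow> i \<le> n - 1 \<Longrightarrow> br (e 1) (e i) = e (i + 1)"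
  by (rule AB[THEN conjunct2, THEN conjunct2, THEN conjunct2, THEN conjunct1, rule_format]) simp
lemma br_e1n: "br (e 1) (e n) = 0" by (rule AB[THEN conjunct2, THEN conjunct2, THEN conjunct2, THEN conjunct2, THEN conjunct1])
lemma br_23: "br (e 2) (e 3) \<in> F 5" unfolding F_def by (rule AB[THEN conjunct2, THEN conjunct2, THEN conjunct2, THEN conjunct2, THEN conjunct2])

lemma br_e1_F: assumes "1 \<le> m" "x \<in> F m" shows "br (e 1) x \<in> F (Suc m)"
proof -
  have "x \<in> V.span (e ` {m..n})" using assms(2) by (simp only: F_def)
  then show ?thesis
  proof (rule br_span_R)
    show "V.subspace (F (Suc m))" by (rule F_sub)
    fix a assume "a \<in> e ` {m..n}"
    then obtain k where k0: "k \<in> {m..n}" "a = e k" by (rule imageE)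
    then have k: "m \<le> k" "k \<le> n" "a = e k" by simp_all
    consider "k = 1" | "2 \<le> k \<and> k \<le> n - 1" | "k = n" using k assms(1) by linarith
    then show "br (e 1) a \<in> F (Suc m)"
    proof cases
      case 1
      then have "br (e 1) a = 0" using k(3) by simp
      then show ?thesis by simp
    next
      case 2
      then have "br (e 1) a = e (k + 1)" using k(3) br_e1[of k] by simp
      moreover have "e (k+1) \<in> F (Suc m)" using 2 k by (intro e_F) linarith+
      ultimately show ?thesis by simp
    next
      case 3
      then have "br (e 1) a = 0" using k(3) br_e1n by simp
      then show ?thesis by simp
    qed
  qed
qed

lemma lcs_Suc: "1 \<le> k \<Longrightarrow> y \<in> lcs s br k \<Longrightarrow> br x y \<in> lcs s br (Suc k)"
  apply (cases k) apply simp
  apply (simp add: bracket_space_def)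
  apply (rule V.span_base) by blast

lemma lcs_sub: "2 \<le> k \<Longrightarrow> V.subspace (lcs s br k)"
  apply (cases k) apply simp subgoal for j apply (cases j) apply simp
    by (simp add: bracket_space_def) done

lemma e_lcs: "1 \<le> k \<Longrightarrow> k + 1 \<le> j \<Longrightarrow> j \<le> n \<Longrightarrow> e j \<in> lcs s br k"
proof (induction k arbitrary: j rule: nat_induct_at_least)
  case base then show ?case by simp
next
  case (Suc k)
  have "e j = br (e 1) (e (j - 1))" using Suc.prems Suc.hyps br_e1[of "j-1"] by simp
  moreover have "e (j - 1) \<in> lcs s br k" using Suc by simp
  ultimately show ?case using lcs_Suc Suc.hyps by simp
qed

lemma F_lcs_eq: assumes "2 \<le> k" "k \<le> n" shows "lcs s br k = F (Suc k)"
proof -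
  have sub: "F (Suc k) \<subseteq> lcs s br k"
    unfolding F_def
  proof (rule V.span_minimal[OF _ lcs_sub[OF assms(1)]], rule subsetI)
    fix x assume "x \<in> e ` {Suc k..n}"
    then obtain j where j0: "j \<in> {Suc k..n}" "x = e j" by (rule imageE)
    then have "Suc k \<le> j" "j \<le> n" "x = e j" by simp_all
    then show "x \<in> lcs s br k" using e_lcs[of k j] assms by simp
  qed
  have ind: "V.independent (e ` {Suc k..n})"
    using e_indep V.independent_mono[of "e ` {1..n}" "e ` {Suc k..n}"] assms by (simp add: image_mono)
  have "V.dim (F (Suc k)) = card (e ` {Suc k..n})"
    unfolding F_def by (rule V.dim_span_eq_card_independent[OF ind])
  also have "\<dots> = n - k"
  proof -
    have "inj_on e {Suc k..n}" by (rule inj_on_subset[OF e_inj]) (use assms in auto)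
    then show ?thesis by (simp add: card_image)
  qed
  also have "\<dots> = V.dim (lcs s br k)" using fil assms unfolding filiform_def by auto
  finally show ?thesis
    using V.subspace_dim_equal[OF F_sub lcs_sub[OF assms(1)] sub] by simp
qed

lemma br_F_any: assumes "2 \<le> m" "y \<in> F m" shows "br x y \<in> F (Suc m)"
proof (cases "m \<le> n")
  case False then show ?thesis using assms F_big by simp
next
  case True
  have "y \<in> lcs s br (m - 1)"
  proof (cases "m = 2")
    case True then show ?thesis by simp
  next
    case False then show ?thesis using F_lcs_eq[of "m-1"] assms \<open>m \<le> n\<close> by simp
  qed
  then have "br x y \<in> lcs s br m" using lcs_Suc[of "m-1"] assms by simp
  then show ?thesis using F_lcs_eq[of m] assms True by simp
qed

lemma jac1: assumes "2 \<le> i" "i \<le> n - 1"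
  shows "br (e (i+1)) z = br (e 1) (br (e i) z) - br (e i) (br (e 1) z)"
proof -
  have h: "br (e 1) (br (e i) z) + br (e i) (br z (e 1)) + br z (e (i+1)) = 0"
    using jacobi[of "e 1" "e i" z] br_e1[OF assms] by simp
  have h1: "br (e i) (br z (e 1)) = - br (e i) (br (e 1) z)"
    by (subst br_anti[of z], rule br_negR)
  have h2: "br z (e (i+1)) = - br (e (i+1)) z" by (rule br_anti)
  have "br (e 1) (br (e i) z) - br (e i) (br (e 1) z) - br (e (i+1)) z = 0"
    using h unfolding h1 h2 by simp
  then show ?thesis by (simp add: algebra_simps)
qed

lemma filt: assumes "2 \<le> i" "i \<le> n" "1 \<le> m" "y \<in> F m" shows "br (e i) y \<in> F (i + m - 1)"
  using assms
proof (induction i arbitrary: m y rule: nat_induct_at_least)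
  case base
  show ?case using base.prems(3) unfolding F_def[of m]
  proof (rule br_span_R)
    fix a assume "a \<in> e ` {m..n}"
    then obtain k where k0: "k \<in> {m..n}" "a = e k" by (rule imageE)
    then have k: "m \<le> k" "k \<le> n" "a = e k" by simp_all
    show "br (e 2) a \<in> F (2 + m - 1)"
    proof (cases "k = 1")
      case True
      then have "br (e 2) a = - e 3" using k br_anti[of "e 2" "e 1"] br_e1[of 2] n3 by simp
      then show ?thesis using True k n3 by (simp add: F_neg_iff e_F)
    next
      case False
      then have k2: "2 \<le> k" using k base.prems(2) by linarith
      have "a \<in> F k" using k e_F by simp
      then have "br (e 2) a \<in> F (Suc k)" using br_F_any[of k a] k2 by simp
      then show ?thesis using F_monoD[of _ "Suc k" "2 + m - 1"] k by simp
    qed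
  qed simp
next
  case (Suc i)
  show ?case using Suc.prems(3) unfolding F_def[of m]
  proof (rule br_span_R)
    fix a assume "a \<in> e ` {m..n}"
    then obtain k where k0: "k \<in> {m..n}" "a = e k" by (rule imageE)
    then have k: "m \<le> k" "k \<le> n" "a = e k" by simp_all
    have j: "br (e (i+1)) a = br (e 1) (br (e i) a) - br (e i) (br (e 1) a)"
      using jac1[of i] Suc by simp
    have "br (e i) a \<in> F (i + k - 1)" using Suc k e_F by simp
    then have t1: "br (e 1) (br (e i) a) \<in> F (i + k)" using br_e1_F[of "i+k-1"] Suc k by simp
    have "br (e 1) a \<in> F (Suc k)" using br_e1_F k Suc e_F by simp
    then have t2: "br (e i) (br (e 1) a) \<in> F (i + k)" using Suc.IH[of "Suc k" "br (e 1) a"] Suc.prems(1) by simp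
    have "br (e (Suc i)) a \<in> F (i + k)" using j t1 t2 F_diff by simp
    then show "br (e (Suc i)) a \<in> F (Suc i + m - 1)" using F_monoD k by simp
  qed simp
qed

end

context fil begin

definition W :: "nat \<Rightarrow> nat \<Rightarrow> bool" where "W i j \<longleftrightarrow> br (e i) (e j) \<in> F (i + j)"

lemma W_sym: "W i j \<Longrightarrow> W j i"
  unfolding W_def using br_anti[of "e j" "e i"] by (simp add: F_neg_iff add.commute)

lemma W1: assumes "1 \<le> j" "j \<le> n" shows "W 1 j"
proof (cases "j = n")
  case True then show ?thesis unfolding W_def using br_e1n by simp
next
  case False
  show ?thesis
  proof (cases "j = 1")
    case True then show ?thesis unfolding W_def by simp
  next
    case False
    then have "br (e 1) (e j) = e (j+1)" using \<open>j \<noteq> n\<close> assms br_e1[of j] by simp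
    moreover have "e (j+1) \<in> F (1 + j)" using \<open>j \<noteq> n\<close> assms by (intro e_F) linarith+
    ultimately show ?thesis unfolding W_def by simp
  qed
qed

lemma W_big: assumes "2 \<le> i" "i \<le> n" "1 \<le> j" "j \<le> n" "n + 2 \<le> i + j" shows "W i j"
proof -
  have "br (e i) (e j) \<in> F (i + j - 1)" using filt[of i j "e j"] assms e_F by simp
  then have "br (e i) (e j) = 0" using F_big[of "i+j-1"] assms by simp
  then show ?thesis unfolding W_def by simp
qed

lemma rel: assumes "2 \<le> a" "a \<le> n - 1" "2 \<le> b" "b \<le> n - 1"
  shows "br (e (a+1)) (e b) + br (e a) (e (b+1)) = br (e 1) (br (e a) (e b))"
  using jac1[OF assms(1,2), of "e b"] br_e1[OF assms(3,4)] by simp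

lemma F_add_iff: "x + y \<in> F m \<Longrightarrow> x \<in> F m \<longleftrightarrow> y \<in> F m"
proof
  assume "x + y \<in> F m" "x \<in> F m"
  then have "(x + y) - x \<in> F m" by (rule F_diff)
  then show "y \<in> F m" by simp
next
  assume "x + y \<in> F m" "y \<in> F m"
  then have "(x + y) - y \<in> F m" by (rule F_diff)
  then show "x \<in> F m" by simp
qed

definition IHS :: "nat \<Rightarrow> bool" where
  "IHS S \<longleftrightarrow> (\<forall>i j. 1 \<le> i \<longrightarrow> i \<le> n \<longrightarrow> 1 \<le> j \<longrightarrow> j \<le> n \<longrightarrow> i + j < S \<longrightarrow> W i j)"

lemma IHSD: "IHS S \<Longrightarrow> 1 \<le> i \<Longrightarrow> i \<le> n \<Longrightarrow> 1 \<le> j \<Longrightarrow> j \<le> n \<Longrightarrow> i + j < S \<Longrightarrow> br (e i) (e j) \<in> F (i + j)"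
  unfolding IHS_def W_def by blast

lemma chain: assumes IH: "IHS S" and a: "2 \<le> a" "a + 3 \<le> S" and S: "S \<le> n + 1"
  shows "br (e (a+1)) (e (S-1-a)) + br (e a) (e (S-a)) \<in> F S"
proof -
  define b where "b = S - 1 - a"
  have b: "2 \<le> b" "b \<le> n - 1" "b + 1 = S - a" "a + b = S - 1" using a S unfolding b_def by linarith+
  have a1: "a \<le> n - 1" using a S by linarith
  have "br (e a) (e b) \<in> F (a + b)" using IHSD[OF IH, of a b] a b a1 by simp
  then have "br (e 1) (br (e a) (e b)) \<in> F (Suc (a + b))" using br_e1_F[of "a+b"] a by simp
  moreover have "Suc (a + b) = S" using b a by linarith
  ultimately show ?thesis using rel[OF a(1) a1 b(1) b(2)] unfolding b_def[symmetric] b(3)[symmetric] by simp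
qed

lemma chain_iff: assumes IH: "IHS S" and a: "2 \<le> a" "a + 3 \<le> S" and S: "S \<le> n + 1"
  shows "br (e (a+1)) (e (S-1-a)) \<in> F S \<longleftrightarrow> br (e a) (e (S-a)) \<in> F S"
  using F_add_iff[OF chain[OF assms]] .

lemma even_case: assumes IH: "IHS S" and S: "S \<le> n + 1" "even S" and ij: "2 \<le> i" "2 \<le> j" "i + j = S"
  shows "W i j"
proof -
  define m where "m = S div 2"
  have Sm: "S = 2 * m" using S(2) unfolding m_def by simp
  have key: "k + 2 \<le> m \<Longrightarrow> br (e (m - k)) (e (m + k)) \<in> F S" for k
  proof (induction k)
    case 0 then show ?case by simp
  next
    case (Suc k)
    define a where "a = m - Suc k"
    have a: "2 \<le> a" "a + 3 \<le> S" "a + 1 = m - k" "S - 1 - a = m + k" "S - a = m + Suc k"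
      using Suc.prems Sm unfolding a_def by linarith+
    have "br (e (a+1)) (e (S-1-a)) \<in> F S" using Suc.IH Suc.prems a by simp
    then have "br (e a) (e (S-a)) \<in> F S" using chain_iff[OF IH a(1) a(2) S(1)] by simp
    then show ?case using a unfolding a_def by simp
  qed
  show ?thesis
  proof (cases "i \<le> m")
    case True
    then have "br (e (m - (m - i))) (e (m + (m - i))) \<in> F S" using key[of "m - i"] ij by simp
    moreover have "m - (m - i) = i" "m + (m - i) = j" using True ij Sm by linarith+
    ultimately show ?thesis unfolding W_def using ij by simp
  next
    case False
    then have "j \<le> m" using ij Sm by linarith
    then have "br (e (m - (m - j))) (e (m + (m - j))) \<in> F S" using key[of "m - j"] ij by simp
    moreover have "m - (m - j) = j" "m + (m - j) = i" using \<open>j \<le> m\<close> ij Sm by linarith+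
    ultimately have "W j i" unfolding W_def using ij by (simp add: add.commute)
    then show ?thesis by (rule W_sym)
  qed
qed

lemma odd_case: assumes IH: "IHS S" and S: "7 \<le> S" "S \<le> n" "odd S" and ij: "2 \<le> i" "2 \<le> j" "i + j = S"
  shows "W i j"
proof -
  define m where "m = S div 2"
  have Sm: "S = 2 * m + 1" using S(3) unfolding m_def by presburger
  have m3: "3 \<le> m" using Sm S by linarith
  define E' where "E' = e (S - 1)"
  have "br (e 2) (e (S-2)) \<in> F (2 + (S - 2) - 1)" using filt[of 2 "S-2" "e (S-2)"] S e_F[of "S-2" "S-2"] by simp
  moreover have "2 + (S - 2) - 1 = S - 1" using S by simp
  ultimately have "br (e 2) (e (S-2)) \<in> F (S - 1)" by simp
  then have "\<exists>c. br (e 2) (e (S-2)) - s c (e (S-1)) \<in> F (Suc (S - 1))"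
    using S by (intro F_step) simp_all
  then obtain t where t: "br (e 2) (e (S-2)) - s t E' \<in> F (Suc (S - 1))"
    unfolding E'_def by (rule exE)
  have SS: "Suc (S - 1) = S" using S by simp
  have C1: "br (e a) (e (S-a)) - s ((-1)^a * t) E' \<in> F S" if "2 \<le> a" "a \<le> S - 2" for a
    using that
  proof (induction a rule: nat_induct_at_least)
    case base then show ?case using t SS by simp
  next
    case (Suc a)
    have ch: "br (e (a+1)) (e (S-1-a)) + br (e a) (e (S-a)) \<in> F S"
      using chain[OF IH Suc.hyps(1) _ ] Suc.prems S by simp
    have ih: "br (e a) (e (S-a)) - s ((-1)^a * t) E' \<in> F S" using Suc.IH Suc.prems by simp
    have eq: "br (e (a+1)) (e (S-1-a)) - s ((-1)^(Suc a) * t) E' =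
      (br (e (a+1)) (e (S-1-a)) + br (e a) (e (S-a))) - (br (e a) (e (S-a)) - s ((-1)^a * t) E')"
      by simp
    have "S - 1 - a = S - Suc a" by simp
    then show ?case using F_diff[OF ch ih] unfolding eq[symmetric] by simp
  qed
  have C2: "br (e (m+1-k)) (e (m+1+k)) - s ((-1)^(m+1-k) * (of_nat k * t)) (e S) \<in> F (S+1)"
    if "k \<le> m - 1" for k
    using that
  proof (induction k)
    case 0 then show ?case by simp
  next
    case (Suc k)
    define a where "a = m - k"
    define b where "b = m + 1 + k"
    have ab: "2 \<le> a" "a \<le> n - 1" "2 \<le> b" "b \<le> n - 1" "a + b = S" "S - a = b" "a \<le> S - 2"
      "m + 1 - k = Suc a" "m + 1 - Suc k = a" "m + 1 + Suc k = b + 1"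
      using Suc.prems Sm S unfolding a_def b_def by linarith+
    have r: "br (e (a+1)) (e b) + br (e a) (e (b+1)) = br (e 1) (br (e a) (e b))"
      by (rule rel[OF ab(1-4)])
    have c1: "br (e a) (e b) - s ((-1)^a * t) E' \<in> F S" using C1[OF ab(1) ab(7)] ab(6) by simp
    have "br (e 1) (br (e a) (e b) - s ((-1)^a * t) E') \<in> F (Suc S)"
      using br_e1_F[OF _ c1] S by simp
    moreover have "br (e 1) E' = e S" unfolding E'_def using br_e1[of "S-1"] S by simp
    ultimately have R: "br (e 1) (br (e a) (e b)) - s ((-1)^a * t) (e S) \<in> F (S+1)"
      by (simp add: br_diffR br_scaleR)
    have ih: "br (e (a+1)) (e b) - s ((-1)^(Suc a) * (of_nat k * t)) (e S) \<in> F (S+1)"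
      using Suc.IH Suc.prems ab unfolding b_def by simp
    have coef: "(-1)^a * (of_nat (Suc k) * t) = (-1)^a * t - (-1)^(Suc a) * (of_nat k * t)"
      by (simp add: algebra_simps)
    have eq: "br (e a) (e (b+1)) - s ((-1)^a * (of_nat (Suc k) * t)) (e S) =
       (br (e 1) (br (e a) (e b)) - s ((-1)^a * t) (e S)) - (br (e (a+1)) (e b) - s ((-1)^(Suc a) * (of_nat k * t)) (e S))"
      unfolding r[symmetric] coef V.scale_left_diff_distrib by (simp add: algebra_simps)
    show ?case using F_diff[OF R ih] unfolding eq[symmetric] ab(9) ab(10) by simp
  qed
  have c2: "br (e 2) E' - s (of_nat (m - 1) * t) (e S) \<in> F (S+1)"
  proof -
    have h: "m + 1 - (m - 1) = 2" "m + 1 + (m - 1) = S - 1" using m3 Sm by linarith+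
    have "br (e (m+1-(m-1))) (e (m+1+(m-1))) - s ((-1)^(m+1-(m-1)) * (of_nat (m-1) * t)) (e S) \<in> F (S+1)"
      by (rule C2) simp
    then show ?thesis unfolding h E'_def by simp
  qed
  have c13: "br (e 3) (e (S-3)) + s t E' \<in> F S" using C1[of 3] S by simp
  have J: "br (e 2) (br (e 3) (e (S-3))) + br (e 3) (br (e (S-3)) (e 2)) + br (e (S-3)) (br (e 2) (e 3)) = 0"
    by (rule jacobi)
  have T2: "br (e 3) (br (e (S-3)) (e 2)) \<in> F (S+1)"
  proof -
    have "br (e (S-3)) (e 2) \<in> F (S - 3 + 2)" using IHSD[OF IH, of "S-3" 2] S by simp
    then have "br (e 3) (br (e (S-3)) (e 2)) \<in> F (3 + (S - 3 + 2) - 1)" using filt[of 3 "S-3+2"] S by simp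
    moreover have "3 + (S - 3 + 2) - 1 = S + 1" using S by simp
    ultimately show ?thesis by simp
  qed
  have T3: "br (e (S-3)) (br (e 2) (e 3)) \<in> F (S+1)"
  proof -
    have "br (e (S-3)) (br (e 2) (e 3)) \<in> F (S - 3 + 5 - 1)" using filt[of "S-3" 5] br_23 S by simp
    moreover have "S - 3 + 5 - 1 = S + 1" using S by simp
    ultimately show ?thesis by simp
  qed
  have D1: "br (e 2) (br (e 3) (e (S-3)) + s t E') \<in> F (S+1)"
  proof -
    have "br (e 2) (br (e 3) (e (S-3)) + s t E') \<in> F (2 + S - 1)" using filt[of 2 S] c13 S by simp
    moreover have "2 + S - 1 = S + 1" using S by simp
    ultimately show ?thesis by simp
  qed
  define D2 where "D2 = br (e 2) E' - s (of_nat (m - 1) * t) (e S)"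
  have eqJ: "s (t * (of_nat (m - 1) * t)) (e S) =
     br (e 2) (br (e 3) (e (S-3)) + s t E') - s t D2 + br (e 3) (br (e (S-3)) (e 2)) + br (e (S-3)) (br (e 2) (e 3))"
  proof -
    have "br (e 2) (br (e 3) (e (S-3)) + s t E') - s t D2 + br (e 3) (br (e (S-3)) (e 2)) + br (e (S-3)) (br (e 2) (e 3))
      = (br (e 2) (br (e 3) (e (S-3))) + br (e 3) (br (e (S-3)) (e 2)) + br (e (S-3)) (br (e 2) (e 3)))
        + s (t * (of_nat (m - 1) * t)) (e S)"
      unfolding D2_def by (simp add: br_addR br_scaleR algebra_simps)
    then show ?thesis using J by simp
  qed
  have "s (t * (of_nat (m - 1) * t)) (e S) \<in> F (S+1)"
    unfolding eqJ using D1 c2 T2 T3 unfolding D2_def[symmetric] by (intro F_add F_diff F_scale)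
  then have "s (t * (of_nat (m - 1) * t)) (e S) \<in> F (Suc S)" by simp
  then have "t * (of_nat (m - 1) * t) = 0" by (rule coef0[rotated 2]) (use S in simp_all)
  moreover have "(of_nat (m - 1) :: 'k) \<noteq> 0" using m3 by simp
  ultimately have t0: "t = 0" by simp
  have "br (e i) (e (S-i)) \<in> F S" using C1[of i] ij t0 by simp
  moreover have "S - i = j" using ij by simp
  ultimately show ?thesis unfolding W_def using ij by simp
qed

end

context fil begin

lemma IHS_step: assumes IH: "IHS S" and ij: "1 \<le> i" "i \<le> n" "1 \<le> j" "j \<le> n" "i + j = S"
  shows "W i j"
proof -
  consider "i = 1" | "j = 1" | "2 \<le> i \<and> 2 \<le> j" using ij by linarith
  then show ?thesis
  proof cases
    case 1 then show ?thesis using W1 ij by simp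
  next
    case 2 then show ?thesis using W1[of i] ij by (simp add: W_sym)
  next
    case 3
    show ?thesis
    proof (cases "n + 2 \<le> S")
      case True then show ?thesis using W_big[of i j] 3 ij by simp
    next
      case False
      show ?thesis
      proof (cases "even S")
        case True then show ?thesis using even_case[OF IH _ True, of i j] 3 ij False by simp
      next
        case odd: False
        have "S \<noteq> n + 1" using odd oddn by auto
        then have Sn: "S \<le> n" using False by linarith
        show ?thesis
        proof (cases "S = 5")
          case True
          then have "i = 2 \<and> j = 3 \<or> i = 3 \<and> j = 2" using 3 ij by linarith
          moreover have "W 2 3" unfolding W_def using br_23 by simp
          ultimately show ?thesis using W_sym by blast
        next
          case False
          then have "7 \<le> S" using odd 3 ij by presburger
          then show ?thesis using odd_case[OF IH \<open>7 \<le> S\<close> Sn odd] 3 ij by simp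
        qed
      qed
    qed
  qed
qed

lemma IHS_all: "IHS S"
proof (induction S)
  case 0 then show ?case unfolding IHS_def by simp
next
  case (Suc S)
  show ?case unfolding IHS_def
  proof (intro allI impI)
    fix i j assume h: "1 \<le> i" "i \<le> n" "1 \<le> j" "j \<le> n" "i + j < Suc S"
    show "W i j"
    proof (cases "i + j = S")
      case True then show ?thesis using IHS_step[OF Suc.IH] h by simp
    next
      case False then show ?thesis using Suc.IH h unfolding IHS_def by simp
    qed
  qed
qed

lemma vergne_e: "1 \<le> i \<Longrightarrow> i \<le> n \<Longrightarrow> 1 \<le> j \<Longrightarrow> j \<le> n \<Longrightarrow> br (e i) (e j) \<in> F (i + j)"
  using IHS_all[of "i + j + 1"] unfolding IHS_def W_def by simp

lemma vergne: assumes "1 \<le> a" "1 \<le> b" "x \<in> F a" "y \<in> F b" shows "br x y \<in> F (a + b)"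
proof -
  have "x \<in> V.span (e ` {a..n})" using assms(3) by (simp only: F_def)
  then show ?thesis
  proof (rule br_span_L)
    show "V.subspace (F (a + b))" by simp
    fix p assume "p \<in> e ` {a..n}"
    then obtain i where i0: "i \<in> {a..n}" "p = e i" by (rule imageE)
    have "y \<in> V.span (e ` {b..n})" using assms(4) by (simp only: F_def)
    then show "br p y \<in> F (a + b)"
    proof (rule br_span_R)
      show "V.subspace (F (a + b))" by simp
      fix q assume "q \<in> e ` {b..n}"
      then obtain j where j0: "j \<in> {b..n}" "q = e j" by (rule imageE)
      have "br (e i) (e j) \<in> F (i + j)" using vergne_e[of i j] i0 j0 assms by simp
      moreover have "a + b \<le> i + j" using i0 j0 by simp
      ultimately show "br p q \<in> F (a + b)" using i0 j0 F_monoD by blast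
    qed
  qed
qed

lemma central: "br x (e n) = 0"
proof -
  have "br x (e n) \<in> F (1 + n)" using vergne[of 1 n x "e n"] F_1 e_F[of n n] n3 by simp
  then show ?thesis using F_big[of "1+n"] by simp
qed

end

context fil begin

lemma bt: "basis_tail s n e i = F i" unfolding basis_tail_def F_def by simp

lemma linD1: assumes "Vector_Spaces.linear s (*) l"
  shows "l (x + y) = l x + l y"
  using assms by (simp add: Vector_Spaces.linear_iff)
lemma linD2: assumes "Vector_Spaces.linear s (*) l"
  shows "l (s c x) = c * l x"
  using assms by (simp add: Vector_Spaces.linear_iff)

lemma lin0: assumes "Vector_Spaces.linear s (*) l" shows "l 0 = 0"
  using linD2[OF assms, of 0 0] by simp

lemma Fn: "F n = V.span {e n}" unfolding F_def by simp

lemma Fn_ex: "x \<in> F n \<Longrightarrow> \<exists>c. x = s c (e n)"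
  unfolding Fn V.span_singleton by blast

lemma dim_Fn: "V.dim (F n) = 1"
  unfolding Fn V.dim_span using e_nz[of n] n3 by simp

lemma en_stab: assumes "Vector_Spaces.linear s (*) l" shows "e n \<in> stabilizer br l"
  unfolding stabilizer_def using central lin0[OF assms] by simp

lemma dim_stab_ge: assumes "Vector_Spaces.linear s (*) l" shows "1 \<le> V.dim (stabilizer br l)"
proof -
  have "V.dim {e n} \<le> V.dim (stabilizer br l)" using en_stab[OF assms] by (intro V.dim_subset) simp
  then show ?thesis using e_nz[of n] n3 by simp
qed

lemma nz: assumes i: "1 \<le> i" "i \<le> n - 1" and H: "bracket_space s br (F i) (F (n - i)) \<noteq> {0}"
  shows "br (e i) (e (n - i)) \<noteq> 0"
proof
  assume z: "br (e i) (e (n - i)) = 0"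
  have zero: "br a b = 0" if a: "a \<in> F i" and b: "b \<in> F (n - i)" for a b
  proof -
    have "i \<le> n" "1 \<le> n - i" "n - i \<le> n" using i n3 by linarith+
    obtain c where c: "a - s c (e i) \<in> F (Suc i)" using F_step[OF i(1) \<open>i \<le> n\<close> a] by (rule exE)
    obtain d where d: "b - s d (e (n-i)) \<in> F (Suc (n - i))" using F_step[OF \<open>1 \<le> n - i\<close> \<open>n - i \<le> n\<close> b] by (rule exE)
    have 1: "br (a - s c (e i)) b \<in> F (Suc i + (n - i))" using vergne[OF _ _ c b] i by simp
    have 2: "br (e i) (b - s d (e (n-i))) \<in> F (i + Suc (n - i))" using vergne[OF _ _ _ d, of i "e i"] i e_F by simp
    have "Suc i + (n - i) = n + 1" "i + Suc (n - i) = n + 1" using i by simp_all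
    then have 1: "br (a - s c (e i)) b = 0" and 2: "br (e i) (b - s d (e (n-i))) = 0"
      using 1 2 F_big[of "n+1"] by simp_all
    have "br a b = br (a - s c (e i)) b + s c (br (e i) b)" by (simp add: br_diffL br_scaleL)
    also have "\<dots> = s c (br (e i) b)" using 1 by simp
    also have "br (e i) b = br (e i) (b - s d (e (n-i))) + s d (br (e i) (e (n - i)))"
      by (simp add: br_diffR br_scaleR)
    also have "\<dots> = 0" using 2 z by simp
    finally show ?thesis by simp
  qed
  have "{br a b |a b. a \<in> F i \<and> b \<in> F (n - i)} \<subseteq> {0}" using zero by blast
  then have "bracket_space s br (F i) (F (n - i)) \<subseteq> V.span {0}"
    unfolding bracket_space_def by (rule V.span_mono)
  moreover have "0 \<in> bracket_space s br (F i) (F (n - i))" unfolding bracket_space_def by (rule V.span_zero)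
  ultimately have "bracket_space s br (F i) (F (n - i)) = {0}" by auto
  with H show False by simp
qed

end

context fil begin

definition l0 :: "'g \<Rightarrow> 'k" where "l0 v = V.representation (e ` {1..n}) v (e n)"

lemma l0_lin: "Vector_Spaces.linear s (*) l0"
  unfolding l0_def[abs_def] by (rule V.linear_representation[OF e_indep e_span])

lemma l0_en: "l0 (e n) = 1"
proof -
  have "e n \<in> e ` {1..n}" using n3 by (intro imageI) simp
  then show ?thesis unfolding l0_def using V.representation_basis[OF e_indep, of "e n"] by simp
qed

lemma stab_l0: assumes H: "\<forall>i\<in>{1..n-1}. bracket_space s br (F i) (F (n - i)) \<noteq> {0}"
  shows "stabilizer br l0 \<subseteq> F n"
proof
  fix y assume y: "y \<in> stabilizer br l0"
  then have ly: "l0 (br x y) = 0" for x unfolding stabilizer_def by simp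
  have "1 \<le> k \<Longrightarrow> k \<le> n \<Longrightarrow> y \<in> F k" for k
  proof (induction k rule: nat_induct_at_least)
    case base then show ?case using F_1 by simp
  next
    case (Suc k)
    have kn: "k \<le> n" using Suc by simp
    obtain c where c: "y - s c (e k) \<in> F (Suc k)" using F_step[OF Suc.hyps kn Suc.IH[OF kn]] by (rule exE)
    define p where "p = n - k"
    have p: "1 \<le> p" "p \<le> n - 1" "n - p = k" "p + k = n" "p \<le> n" using Suc unfolding p_def by linarith+
    have "br (e p) (e k) \<in> F n" using vergne_e[of p k] p Suc kn by simp
    then obtain lam where lam: "br (e p) (e k) = s lam (e n)" using Fn_ex by blast
    have "p \<in> {1..n-1}" using p by simp
    then have "bracket_space s br (F p) (F (n - p)) \<noteq> {0}" by (rule bspec[OF H])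
    then have "br (e p) (e (n - p)) \<noteq> 0" by (rule nz[OF p(1) p(2)])
    then have "br (e p) (e k) \<noteq> 0" using p by simp
    then have lam0: "lam \<noteq> 0" using lam by auto
    have "br (e p) (y - s c (e k)) \<in> F (p + Suc k)" using vergne[OF _ _ _ c, of p "e p"] p e_F by simp
    then have z: "br (e p) (y - s c (e k)) = 0" using F_big[of "p + Suc k"] p by simp
    have "br (e p) y = br (e p) (y - s c (e k)) + s c (br (e p) (e k))" by (simp add: br_diffR br_scaleR)
    also have "\<dots> = s (c * lam) (e n)" using z lam by simp
    finally have "l0 (br (e p) y) = c * lam" using linD2[OF l0_lin] l0_en by simp
    then have "c = 0" using ly[of "e p"] lam0 by simp
    then show ?case using c by simp
  qed
  then show "y \<in> F n" using n3 by simp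
qed

lemma chi_eq1: assumes H: "\<forall>i\<in>{1..n-1}. bracket_space s br (F i) (F (n - i)) \<noteq> {0}"
  shows "chi s br = 1"
  unfolding chi_def
proof (rule Least_equality)
  have "V.dim (stabilizer br l0) \<le> V.dim (F n)" using stab_l0[OF H] by (rule V.dim_subset)
  then have "V.dim (stabilizer br l0) = 1" using dim_Fn dim_stab_ge[OF l0_lin] by simp
  then show "\<exists>l. Vector_Spaces.linear s (*) l \<and> V.dim (stabilizer br l) = 1" using l0_lin by blast
next
  fix y assume "\<exists>l. Vector_Spaces.linear s (*) l \<and> V.dim (stabilizer br l) = y"
  then show "1 \<le> y" using dim_stab_ge by blast
qed

end

context fil begin

lemma hyper:
  assumes U: "V.subspace U" and f1: "\<And>x y. f (x + y) = f x + f y" and f2: "\<And>c x. f (s c x) = c * f x"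
  shows "V.dim U \<le> V.dim {u \<in> U. f u = 0} + 1"
proof (cases "\<forall>u\<in>U. f u = 0")
  case True
  then have "{u \<in> U. f u = 0} = U" by blast
  then show ?thesis by simp
next
  case False
  then obtain u0 where u0: "u0 \<in> U" "f u0 \<noteq> 0" by blast
  define K where "K = {u \<in> U. f u = 0}"
  have "U \<subseteq> V.span (insert u0 K)"
  proof
    fix u assume u: "u \<in> U"
    define k where "k = f u / f u0"
    have e1: "u - s k u0 = u + s (- k) u0" by simp
    have "f (u + s (- k) u0) = f u + (- k) * f u0" by (simp only: f1 f2)
    then have "f (u - s k u0) = f u + (- k) * f u0" by (simp only: e1)
    also have "\<dots> = 0" unfolding k_def using u0 by simp
    finally have "u - s k u0 \<in> K" unfolding K_def using u u0 U by (simp add: V.subspace_diff V.subspace_scale)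
    then have "u - s k u0 \<in> V.span K" by (rule V.span_base)
    then show "u \<in> V.span (insert u0 K)" unfolding V.span_breakdown_eq by blast
  qed
  then have "V.dim U \<le> V.dim (insert u0 K)" by (rule V.dim_mono)
  also have "\<dots> \<le> V.dim K + 1" unfolding V.dim_insert by simp
  finally show ?thesis unfolding K_def .
qed

lemma Ksub: assumes l: "Vector_Spaces.linear s (*) l"
  shows "V.subspace {u \<in> F p. \<forall>a\<in>{1..r}. l (br (e a) u) = 0}"
  unfolding V.subspace_def
  using F_0 F_add F_scale linD1[OF l] linD2[OF l] lin0[OF l] by (simp add: br_addR br_scaleR)

lemma Kdim: assumes l: "Vector_Spaces.linear s (*) l"
  shows "V.dim (F p) \<le> V.dim {u \<in> F p. \<forall>a\<in>{1..r}. l (br (e a) u) = 0} + r"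
proof (induction r)
  case 0 then show ?case by simp
next
  case (Suc r)
  let ?K = "{u \<in> F p. \<forall>a\<in>{1..r}. l (br (e a) u) = 0}"
  have eq: "{u \<in> ?K. l (br (e (Suc r)) u) = 0} = {u \<in> F p. \<forall>a\<in>{1..Suc r}. l (br (e a) u) = 0}"
    by (auto simp: atLeastAtMostSuc_conv)
  have "V.dim ?K \<le> V.dim {u \<in> ?K. l (br (e (Suc r)) u) = 0} + 1"
    by (rule hyper[OF Ksub[OF l]]) (simp_all add: br_addR br_scaleR linD1[OF l] linD2[OF l])
  then show ?case using Suc.IH unfolding eq by simp
qed

lemma dimF: assumes "1 \<le> p" "p \<le> n" shows "V.dim (F p) = n + 1 - p"
proof -
  have ind: "V.independent (e ` {p..n})"
    using e_indep V.independent_mono[of "e ` {1..n}" "e ` {p..n}"] assms by (simp add: image_mono)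
  have "inj_on e {p..n}" by (rule inj_on_subset[OF e_inj]) (use assms in auto)
  then show ?thesis unfolding F_def V.dim_span_eq_card_independent[OF ind] by (simp add: card_image)
qed

lemma H_of_chi: assumes chi: "chi s br = 1"
  shows "\<forall>i\<in>{1..n-1}. bracket_space s br (F i) (F (n - i)) \<noteq> {0}"
proof (rule ccontr)
  assume "\<not> ?thesis"
  then obtain i where i: "i \<in> {1..n-1}" and B0: "bracket_space s br (F i) (F (n - i)) = {0}" by blast
  let ?P = "\<lambda>d. \<exists>l. Vector_Spaces.linear s (*) l \<and> V.dim (stabilizer br l) = d"
  have "?P (V.dim (stabilizer br l0))" using l0_lin by blast
  then have "?P (LEAST d. ?P d)" by (rule LeastI)
  then have "?P 1" using chi unfolding chi_def by simp
  then obtain l where l: "Vector_Spaces.linear s (*) l" and d1: "V.dim (stabilizer br l) = 1" by blast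
  define K where "K = {u \<in> F (n - i). \<forall>a\<in>{1..i-1}. l (br (e a) u) = 0}"
  have "V.dim (F (n - i)) \<le> V.dim K + (i - 1)" unfolding K_def by (rule Kdim[OF l])
  moreover have "V.dim (F (n - i)) = i + 1"
  proof -
    have "1 \<le> n - i" "n - i \<le> n" "n + 1 - (n - i) = i + 1" using i by auto
    then show ?thesis using dimF[of "n - i"] by simp
  qed
  ultimately have K2: "2 \<le> V.dim K" using i by simp
  have "K \<subseteq> stabilizer br l"
  proof
    fix u assume u: "u \<in> K"
    have ker: "V.subspace {w. l w = 0}" unfolding V.subspace_def
      using linD1[OF l] linD2[OF l] lin0[OF l] by simp
    have "br x u \<in> {w. l w = 0}" for x
    proof -
      have "x \<in> V.span (e ` {1..n})" using e_span by simp
      then show ?thesis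
      proof (rule br_span_L[OF _ ker])
        fix a assume "a \<in> e ` {1..n}"
        then obtain q where q0: "q \<in> {1..n}" "a = e q" by (rule imageE)
        show "br a u \<in> {w. l w = 0}"
        proof (cases "q \<le> i - 1")
          case True then show ?thesis using u q0 unfolding K_def by simp
        next
          case False
          then have "e q \<in> F i" using q0 by (intro e_F) simp_all
          moreover have "u \<in> F (n - i)" using u unfolding K_def by simp
          ultimately have "br (e q) u \<in> bracket_space s br (F i) (F (n - i))"
            unfolding bracket_space_def by (intro V.span_base) blast
          then have "br (e q) u = 0" using B0 by simp
          then show ?thesis using q0 lin0[OF l] by simp
        qed
      qed
    qed
    then show "u \<in> stabilizer br l" unfolding stabilizer_def by simp
  qed
  then have "V.dim K \<le> V.dim (stabilizer br l)" by (rule V.dim_subset)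
  then show False using K2 d1 by simp
qed

end

theorem theorem6p3:
  fixes s :: "'k::field_char_0 \<Rightarrow> 'g::ab_group_add \<Rightarrow> 'g"
    and br :: "'g \<Rightarrow> 'g \<Rightarrow> 'g"
    and n :: nat and e :: "nat \<Rightarrow> 'g"
  assumes "filiform s br n"
    and "odd n" and "n \<ge> 3"
    and "adapted_basis s br n e"
  shows "chi s br = 1 \<longleftrightarrow>
         (\<forall>i\<in>{1..n-1}. bracket_space s br (basis_tail s n e i) (basis_tail s n e (n - i)) \<noteq> {0})"
proof -
  interpret fil s br n e by (rule fil.intro[OF assms])
  show ?thesis unfolding bt using chi_eq1 H_of_chi by blast
qed

end
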